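(* For all finite simple graphs $G$ and $H$, $\alpha_{\mathcal S}(G\boxtimes H)\le\alpha_{\mathcal S}(G)\,\alpha_{\mathcal S}(H)$.
   Context: The strong product $G\boxtimes H$ has vertex set $V(G)\times V(H)$, with $(i,j)\sim(i',j')$ iff ($i\sim_G i'$ and $j\sim_H j'$) or ($i\sim_G i'$ and $j=j'$) or ($i=i'$ and $j\sim_H j'$). For a graph on $n$ vertices, a weighted adjacency matrix is a real symmetric $A$ with $A_{ii}=0$ and $A_{ij}=0$ for non-adjacent $i\ne j$; $\mathcal S_n=\{\boldsymbol v\in\mathbb R^n:\langle\boldsymbol 1,\boldsymbol v\rangle=|\boldsymbol v|^2\}$ with $\boldsymbol 1$ the all-ones vector; and the spherical independence number is $\alpha_{\mathcal S}(G)=\inf_A\sup\{|\boldsymbol v|^2:\boldsymbol v\in\mathcal S_n,\ \langle\boldsymbol v,A\boldsymbol v\rangle=0\}$ over weighted adjacency matrices $A$ of $G$. *)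

theory Defs
  imports Complex_Main
begin

text \<open>A finite simple graph: vertex set = UNIV of a finite type, adjacency given by a
  symmetric irreflexive relation.\<close>
definition simple_graph :: "('a::finite \<Rightarrow> 'a \<Rightarrow> bool) \<Rightarrow> bool" where
  "simple_graph E \<longleftrightarrow> symp E \<and> irreflp E"

definition strong_product ::
  "('a \<Rightarrow> 'a \<Rightarrow> bool) \<Rightarrow> ('b \<Rightarrow> 'b \<Rightarrow> bool) \<Rightarrow> ('a \<times> 'b) \<Rightarrow> ('a \<times> 'b) \<Rightarrow> bool" where
  "strong_product E F = (\<lambda>(i, j) (i', j').
      (E i i' \<and> F j j') \<or> (E i i' \<and> j = j') \<or> (i = i' \<and> F j j'))"

definition weighted_adj :: "('a \<Rightarrow> 'a \<Rightarrow> bool) \<Rightarrow> ('a \<Rightarrow> 'a \<Rightarrow> real) \<Rightarrow> bool" where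
  "weighted_adj E A \<longleftrightarrow> (\<forall>i j. A i j = A j i) \<and> (\<forall>i. A i i = 0)
     \<and> (\<forall>i j. i \<noteq> j \<and> \<not> E i j \<longrightarrow> A i j = 0)"

definition sphS :: "('a::finite \<Rightarrow> real) set" where
  "sphS = {v. (\<Sum>i\<in>UNIV. v i) = (\<Sum>i\<in>UNIV. (v i)\<^sup>2)}"

definition quad_form :: "('a::finite \<Rightarrow> 'a \<Rightarrow> real) \<Rightarrow> ('a \<Rightarrow> real) \<Rightarrow> real" where
  "quad_form A v = (\<Sum>i\<in>UNIV. \<Sum>j\<in>UNIV. v i * A i j * v j)"

definition sqnorm :: "('a::finite \<Rightarrow> real) \<Rightarrow> real" where
  "sqnorm v = (\<Sum>i\<in>UNIV. (v i)\<^sup>2)"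

text \<open>Spherical independence number (inf over weighted adjacency matrices of the sup of
  |v|^2 over v in S_n with <v, A v> = 0; both sets are nonempty and bounded).\<close>
definition alpha_S :: "('a::finite \<Rightarrow> 'a \<Rightarrow> bool) \<Rightarrow> real" where
  "alpha_S E = (INF A \<in> {A. weighted_adj E A}.
       SUP v \<in> {v \<in> sphS. quad_form A v = 0}. sqnorm v)"

end

theory Submission imports Defs begin

definition bil :: "('a::finite \<Rightarrow> 'a \<Rightarrow> real) \<Rightarrow> ('a \<Rightarrow> real) \<Rightarrow> ('a \<Rightarrow> real) \<Rightarrow> real" where
  "bil M u x = (\<Sum>i\<in>UNIV. \<Sum>j\<in>UNIV. u i * M i j * x j)"

definition symm :: "('a \<Rightarrow> 'a \<Rightarrow> real) \<Rightarrow> bool" where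
  "symm M \<longleftrightarrow> (\<forall>i j. M i j = M j i)"

definition psd :: "('a::finite \<Rightarrow> 'a \<Rightarrow> real) \<Rightarrow> bool" where
  "psd M \<longleftrightarrow> (\<forall>v. quad_form M v \<ge> 0)"

definition sA :: "('a::finite \<Rightarrow> 'a \<Rightarrow> real) \<Rightarrow> real" where
  "sA A = (SUP v \<in> {v \<in> sphS. quad_form A v = 0}. sqnorm v)"

lemma qf_expand:
  assumes "symm M"
  shows "quad_form M (\<lambda>i. u i + t * x i) = quad_form M u + 2*t*bil M u x + t^2 * quad_form M x"
proof -
  have e: "(u i + t * x i) * M i j * (u j + t * x j) =
     u i * M i j * u j + t * (u i * M i j * x j) + t * (x i * M i j * u j) + t^2 * (x i * M i j * x j)" for i j
    by (simp add: algebra_simps power2_eq_square)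
  have s: "(\<Sum>i\<in>UNIV. \<Sum>j\<in>UNIV. x i * M i j * u j) = bil M u x"
    unfolding bil_def using assms unfolding symm_def
    by (subst sum.swap) (simp add: mult.commute mult.left_commute)
  show ?thesis
    unfolding quad_form_def e sum.distrib sum_distrib_left[symmetric] s
    by (simp add: bil_def)
qed

lemma qf_add: "quad_form (\<lambda>i j. M i j + N i j) v = quad_form M v + quad_form N v"
  unfolding quad_form_def by (simp add: algebra_simps sum.distrib)

lemma qf_scale: "quad_form (\<lambda>i j. c * M i j) v = c * quad_form M v"
  unfolding quad_form_def by (simp add: algebra_simps sum_distrib_left)

lemma qf_smult_vec: "quad_form M (\<lambda>i. c * v i) = c^2 * quad_form M v"
  unfolding quad_form_def by (simp add: algebra_simps sum_distrib_left power2_eq_square)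

lemma qf_unit: "quad_form M (\<lambda>k. if k = a then 1 else 0) = M a a"
  unfolding quad_form_def by (simp add: if_distrib[of "\<lambda>x. x * _"] if_distrib[of "\<lambda>x. _ * x"] cong: if_cong)

lemma bil_unit: "bil M (\<lambda>k. if k = a then 1 else 0) (\<lambda>k. if k = b then 1 else 0) = M a b"
  unfolding bil_def by (simp add: if_distrib[of "\<lambda>x. x * _"] if_distrib[of "\<lambda>x. _ * x"] cong: if_cong)

lemma sqnorm_bound:
  assumes "v \<in> sphS"
  shows "sqnorm (v::'a::finite \<Rightarrow> real) \<le> real (card (UNIV::'a set))"
proof -
  have "sqnorm v = (\<Sum>i\<in>UNIV. v i)" using assms by (simp add: sphS_def sqnorm_def)
  also have "\<dots> \<le> (\<Sum>i\<in>UNIV. ((v i)^2 + 1)/2)"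
  proof (intro sum_mono)
    fix i have "(v i - 1)^2 \<ge> 0" by simp
    thus "v i \<le> ((v i)^2 + 1)/2" by (simp add: power2_diff field_simps)
  qed
  also have "\<dots> = sqnorm v / 2 + real (card (UNIV::'a set)) / 2"
    by (simp add: sqnorm_def sum_divide_distrib[symmetric] sum.distrib)
  finally show ?thesis by simp
qed

lemma finsler_pair:
  fixes F G :: "'a::finite \<Rightarrow> 'a \<Rightarrow> real"
  assumes sF: "symm F" and sG: "symm G"
    and hyp: "\<forall>w. quad_form G w = 0 \<longrightarrow> quad_form F w \<ge> 0"
    and gu: "quad_form G u > 0" and gx: "quad_form G x < 0"
  shows "quad_form F u * (- quad_form G x) + quad_form F x * quad_form G u \<ge> 0"
proof -
  define a0 where "a0 = quad_form G u"
  define c where "c = quad_form G x"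
  define b where "b = bil G u x"
  define e where "e = bil F u x"
  define fu where "fu = quad_form F u"
  define fx where "fx = quad_form F x"
  define D where "D = b^2 - a0*c"
  have a0p: "a0 > 0" and cn: "c < 0" using gu gx a0_def c_def by auto
  have "a0 * c < 0" using a0p cn by (simp add: mult_pos_neg)
  hence Dp: "D > 0" unfolding D_def by (smt (verit) zero_le_power2)
  define sd where "sd = sqrt D"
  have sdp: "sd > 0" using Dp sd_def by simp
  have sd2: "sd^2 = D" using Dp sd_def by simp
  define t1 where "t1 = (sd - b)/c"
  define t2 where "t2 = (- sd - b)/c"
  have ct1: "c*t1 = sd - b" and ct2: "c*t2 = - sd - b" using cn by (auto simp: t1_def t2_def)
  have root: "a0 + 2*t*b + t^2*c = 0" if "c*t = s - b" "s^2 = D" for t s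
  proof -
    have "c*(a0 + 2*t*b + t^2*c) = (c*t)^2 + 2*b*(c*t) + a0*c" by (simp add: algebra_simps power2_eq_square)
    also have "\<dots> = 0" unfolding that(1) using that(2) by (simp add: D_def algebra_simps power2_eq_square)
    finally show ?thesis using cn by simp
  qed
  have I: "fu + 2*t*e + t^2*fx \<ge> 0" if "c*t = s - b" "s^2 = D" for t s
  proof -
    have "quad_form G (\<lambda>i. u i + t * x i) = 0"
      using root[OF that] qf_expand[OF sG] by (simp add: a0_def b_def c_def)
    hence "quad_form F (\<lambda>i. u i + t * x i) \<ge> 0" using hyp by blast
    thus ?thesis using qf_expand[OF sF] by (simp add: fu_def e_def fx_def)
  qed
  have I1: "fu + 2*t1*e + t1^2*fx \<ge> 0" by (rule I[OF ct1 sd2])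
  have I2: "fu + 2*t2*e + t2^2*fx \<ge> 0" by (rule I[of t2 "- sd"]) (use ct2 sd2 in auto)
  have "c*c*(t1*t2) = (c*t1)*(c*t2)" by (simp add: algebra_simps)
  also have "\<dots> = (sd - b)*(- sd - b)" using ct1 ct2 by simp
  also have "\<dots> = b^2 - sd^2" by (simp add: algebra_simps power2_eq_square)
  also have "\<dots> = a0 * c" using sd2 D_def by simp
  finally have "c*(c*(t1*t2)) = c * a0" by (simp add: mult.assoc mult.commute)
  hence ct12: "c*(t1*t2) = a0" using cn by simp
  hence "t1*t2 = a0/c" using cn by (simp add: field_simps)
  hence t12n: "t1*t2 < 0" using cn a0p by (simp add: divide_pos_neg)
  have "c*(t2 - t1) = -2*sd" using ct1 ct2 by (simp add: algebra_simps)
  hence "t2 - t1 = (-2*sd)/c" using cn by (simp add: field_simps)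
  hence "t2 - t1 > 0" using cn sdp by (simp add: divide_pos_neg)
  hence t1n: "t1 < 0" and t2p: "t2 > 0" using t12n by (auto simp: mult_less_0_iff)
  have m1: "t2 * (fu + 2*t1*e + t1^2*fx) \<ge> 0" using I1 t2p by simp
  have m2: "(-t1) * (fu + 2*t2*e + t2^2*fx) \<ge> 0" using I2 t1n by (intro mult_nonneg_nonneg) simp_all
  have "t2 * (fu + 2*t1*e + t1^2*fx) + (-t1) * (fu + 2*t2*e + t2^2*fx) \<ge> 0"
    using add_nonneg_nonneg[OF m1 m2] .
  hence "(t2 - t1) * (fu - t1*t2*fx) \<ge> 0" by (simp add: algebra_simps power2_eq_square)
  hence "fu - t1*t2*fx \<ge> 0" using \<open>t2 - t1 > 0\<close> by (simp add: zero_le_mult_iff)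
  hence "(-c) * (fu - t1*t2*fx) \<ge> 0" using cn by (intro mult_nonneg_nonneg) simp_all
  moreover have "(-c) * (fu - t1*t2*fx) = fu * (-c) + fx * (c*(t1*t2))" by (simp add: algebra_simps)
  ultimately have "fu * (-c) + fx * a0 \<ge> 0" using ct12 by simp
  thus ?thesis by (simp add: fu_def fx_def a0_def c_def)
qed

lemma finsler:
  fixes F G :: "'a::finite \<Rightarrow> 'a \<Rightarrow> real"
  assumes sF: "symm F" and sG: "symm G"
    and hyp: "\<forall>w. quad_form G w = 0 \<longrightarrow> quad_form F w \<ge> 0"
    and gu: "quad_form G u0 > 0" and gx: "quad_form G x0 < 0"
  shows "\<exists>l. \<forall>u. quad_form F u + l * quad_form G u \<ge> 0"
proof -
  have key: "- quad_form F u / quad_form G u \<le> - quad_form F x / quad_form G x"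
    if "quad_form G u > 0" "quad_form G x < 0" for u x
  proof -
    define fu where "fu = quad_form F u"
    define fx where "fx = quad_form F x"
    define gu where "gu = quad_form G u"
    define gx where "gx = quad_form G x"
    have p: "gu > 0" "gx < 0" using that gu_def gx_def by auto
    have "fu * (- gx) + fx * gu \<ge> 0" using finsler_pair[OF sF sG hyp that] fu_def fx_def gu_def gx_def by simp
    hence "fu * gx \<le> fx * gu" by simp
    hence "fu * gx / (gu * gx) \<ge> fx * gu / (gu * gx)"
      using p by (intro divide_right_mono_neg) (simp_all add: mult_pos_neg less_imp_le)
    hence "fu / gu \<ge> fx / gx" using p by simp
    thus ?thesis by (simp add: fu_def fx_def gu_def gx_def)
  qed
  define Sp where "Sp = (\<lambda>u. - quad_form F u / quad_form G u) ` {u. quad_form G u > 0}"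
  have ne: "Sp \<noteq> {}" using gu unfolding Sp_def by blast
  have bdd: "bdd_above Sp" unfolding Sp_def bdd_above_def using key[OF _ gx] by blast
  define l where "l = Sup Sp"
  have "quad_form F u + l * quad_form G u \<ge> 0" for u
  proof (cases "quad_form G u > 0")
    case True
    hence "- quad_form F u / quad_form G u \<le> l" unfolding l_def
      by (intro cSup_upper bdd) (auto simp: Sp_def)
    hence "- quad_form F u \<le> l * quad_form G u" using pos_divide_le_eq[OF True, of "- quad_form F u" l] by simp
    then show ?thesis by simp
  next
    case False
    show ?thesis
    proof (cases "quad_form G u = 0")
      case True thus ?thesis using hyp by simp
    next
      case F2: False
      hence neg: "quad_form G u < 0" using False by simp
      have "l \<le> - quad_form F u / quad_form G u" unfolding l_def
        by (rule cSup_least[OF ne]) (auto simp: Sp_def dest: key[OF _ neg])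
      hence "- quad_form F u \<le> l * quad_form G u" using neg_le_divide_eq[OF neg, of l "- quad_form F u"] by simp
      then show ?thesis by simp
    qed
  qed
  thus ?thesis by blast
qed

lemma qf_F: "quad_form (\<lambda>i j. (if i = j then a else 0) - 1) u = a * sqnorm u - (\<Sum>i\<in>UNIV. u i)^2"
proof -
  have "quad_form (\<lambda>i j. (if i = j then a else 0) - 1) u
      = (\<Sum>i\<in>UNIV. \<Sum>j\<in>UNIV. u i * (if i = j then a else 0) * u j) - (\<Sum>i\<in>UNIV. \<Sum>j\<in>UNIV. u i * u j)"
    unfolding quad_form_def by (simp add: algebra_simps sum_subtractf)
  also have "\<dots> = a * sqnorm u - (\<Sum>i\<in>UNIV. u i)^2"
    by (simp add: if_distrib[of "\<lambda>x. _ * x"] if_distrib[of "\<lambda>x. x * _"] sqnorm_def power2_eq_square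
        sum_distrib_left sum_distrib_right algebra_simps cong: if_cong)
  finally show ?thesis .
qed

lemma sA_set_ne: "(\<lambda>_. 0) \<in> {v \<in> sphS. quad_form A v = 0}"
  by (simp add: sphS_def quad_form_def)

lemma sA_bdd: "bdd_above (sqnorm ` {v \<in> sphS. quad_form (A::'a::finite \<Rightarrow> 'a \<Rightarrow> real) v = 0})"
  unfolding bdd_above_def using sqnorm_bound by blast

lemma sA_upper: "v \<in> sphS \<Longrightarrow> quad_form A v = 0 \<Longrightarrow> sqnorm v \<le> sA A"
  unfolding sA_def by (rule cSUP_upper[OF _ sA_bdd]) simp

lemma sA_ge1:
  assumes "\<forall>i. A i i = 0"
  shows "sA (A::'a::finite \<Rightarrow> 'a \<Rightarrow> real) \<ge> 1"
proof -
  fix a :: 'a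
  define e where "e = (\<lambda>k::'a. if k = a then (1::real) else 0)"
  have "e \<in> sphS" unfolding sphS_def e_def by (simp add: if_distrib[of "\<lambda>x. x^2"] cong: if_cong)
  moreover have "quad_form A e = 0" unfolding e_def qf_unit using assms by simp
  moreover have "sqnorm e = 1" unfolding sqnorm_def e_def by (simp add: if_distrib[of "\<lambda>x. x^2"] cong: if_cong)
  ultimately show ?thesis using sA_upper by metis
qed

lemma sA_nonneg: "sA A \<ge> 0"
proof -
  have "sqnorm (\<lambda>_::'a. 0::real) \<le> sA A" using sA_set_ne by (intro sA_upper) auto
  thus ?thesis by (simp add: sqnorm_def)
qed

lemma null_bound:
  assumes "quad_form A u = 0"
  shows "(\<Sum>i\<in>UNIV. u i)^2 \<le> sA A * sqnorm u"
proof (cases "(\<Sum>i\<in>UNIV. u i) = 0")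
  case True
  thus ?thesis using sA_nonneg[of A] by (simp add: sqnorm_def sum_nonneg mult_nonneg_nonneg)
next
  case False
  define s where "s = (\<Sum>i\<in>UNIV. u i)"
  define N where "N = sqnorm u"
  have "N \<noteq> 0"
  proof
    assume "N = 0"
    hence "\<forall>i\<in>UNIV. (u i)^2 = 0" unfolding N_def sqnorm_def by (subst (asm) sum_nonneg_eq_0_iff) auto
    hence "s = 0" unfolding s_def by simp
    thus False using False s_def by simp
  qed
  have Npos: "N > 0" using \<open>N \<noteq> 0\<close> unfolding N_def sqnorm_def by (simp add: sum_nonneg order_le_neq_trans)
  define v where "v = (\<lambda>i. (s/N) * u i)"
  have sv: "(\<Sum>i\<in>UNIV. v i) = s^2/N" unfolding v_def by (simp add: s_def power2_eq_square flip: sum_divide_distrib sum_distrib_left)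
  have "sqnorm v = (\<Sum>i\<in>UNIV. (s/N)^2 * (u i)^2)" unfolding v_def sqnorm_def
    by (intro sum.cong refl) (simp add: power_mult_distrib power_divide)
  also have "\<dots> = (s/N)^2 * N" by (simp add: N_def sqnorm_def sum_distrib_left)
  also have "\<dots> = s^2/N" using Npos by (simp add: power2_eq_square)
  finally have nv: "sqnorm v = s^2/N" .
  have "v \<in> sphS" using sv nv by (simp add: sphS_def sqnorm_def)
  moreover have "quad_form A v = 0" unfolding v_def qf_smult_vec using assms by simp
  ultimately have "s^2/N \<le> sA A" using sA_upper nv by metis
  thus ?thesis using Npos by (simp add: s_def N_def pos_divide_le_eq)
qed

lemma cert:
  fixes A :: "'a::finite \<Rightarrow> 'a \<Rightarrow> real"
  assumes wa: "weighted_adj E A"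
  shows "\<exists>l. psd (\<lambda>i j. ((if i = j then sA A else 0) - 1) + l * A i j)"
proof -
  define F where "F = (\<lambda>i j::'a. (if i = j then sA A else 0) - (1::real))"
  have sF: "symm F" unfolding symm_def F_def by auto
  have sAA: "symm A" using wa unfolding symm_def weighted_adj_def by auto
  have diag: "\<forall>i. A i i = 0" using wa unfolding weighted_adj_def by auto
  have hyp: "\<forall>w. quad_form A w = 0 \<longrightarrow> quad_form F w \<ge> 0"
    using null_bound unfolding F_def qf_F by auto
  have main: "\<exists>l. \<forall>u. quad_form F u + l * quad_form A u \<ge> 0"
  proof (cases "\<forall>i j. A i j = 0")
    case True
    hence "quad_form A u = 0" for u unfolding quad_form_def by simp
    thus ?thesis using hyp by (intro exI[of _ 0]) auto
  next
    case False
    then obtain i j where ij: "A i j \<noteq> 0" by blast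
    define ei where "ei = (\<lambda>k::'a. if k = i then (1::real) else 0)"
    define ej where "ej = (\<lambda>k::'a. if k = j then (1::real) else 0)"
    have q: "quad_form A (\<lambda>k. ei k + t * ej k) = 2 * t * A i j" for t
      unfolding qf_expand[OF sAA] ei_def ej_def qf_unit bil_unit using diag by simp
    show ?thesis
    proof (cases "A i j > 0")
      case True
      show ?thesis
        by (rule finsler[OF sF sAA hyp, of "\<lambda>k. ei k + 1 * ej k" "\<lambda>k. ei k + (-1) * ej k"])
           (simp_all only: q, use True in simp_all)
    next
      case False
      hence "A i j < 0" using ij by simp
      show ?thesis
        by (rule finsler[OF sF sAA hyp, of "\<lambda>k. ei k + (-1) * ej k" "\<lambda>k. ei k + 1 * ej k"])
           (simp_all only: q, use \<open>A i j < 0\<close> in simp_all)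
    qed
  qed
  then obtain l where l: "\<forall>u. quad_form F u + l * quad_form A u \<ge> 0" by blast
  have "psd (\<lambda>i j. F i j + l * A i j)"
    unfolding psd_def qf_add[of F "\<lambda>i j. l * A i j"] qf_scale using l by simp
  thus ?thesis unfolding F_def by blast
qed

lemma unit_bil_right: "bil M v (\<lambda>k. if k = a then 1 else 0) = (\<Sum>i\<in>UNIV. v i * M i a)"
  unfolding bil_def by (simp add: if_distrib[of "\<lambda>x. _ * x"] cong: if_cong)

lemma unit_bil_left: "bil M (\<lambda>k. if k = a then 1 else 0) v = (\<Sum>j\<in>UNIV. M a j * v j)"
  unfolding bil_def by (subst sum.swap) (simp add: if_distrib[of "\<lambda>x. x * _"] cong: if_cong)

lemma decomp:
  fixes S :: "'a::finite set"
  assumes "finite S"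
  shows "\<forall>Q. symm Q \<and> psd Q \<and> (\<forall>i j. i \<notin> S \<or> j \<notin> S \<longrightarrow> Q i j = 0) \<longrightarrow>
           (\<exists>rs. \<forall>i j. Q i j = (\<Sum>r\<leftarrow>rs. r i * r j))"
  using assms
proof (induction S rule: finite_induct)
  case empty
  show ?case by (intro allI impI exI[of _ "[]"]) auto
next
  case (insert x S)
  show ?case
  proof (intro allI impI)
    fix Q :: "'a \<Rightarrow> 'a \<Rightarrow> real"
    assume asm: "symm Q \<and> psd Q \<and> (\<forall>i j. i \<notin> insert x S \<or> j \<notin> insert x S \<longrightarrow> Q i j = 0)"
    hence sQ: "symm Q" and pQ: "psd Q" and supp: "\<forall>i j. i \<notin> insert x S \<or> j \<notin> insert x S \<longrightarrow> Q i j = 0"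
      by auto
    have Qs: "Q i j = Q j i" for i j using sQ unfolding symm_def by auto
    define ex where "ex = (\<lambda>k::'a. if k = x then (1::real) else 0)"
    have "Q x x \<ge> 0" using pQ unfolding psd_def by (metis qf_unit)
    show "\<exists>rs. \<forall>i j. Q i j = (\<Sum>r\<leftarrow>rs. r i * r j)"
    proof (cases "Q x x = 0")
      case True
      have row: "Q x j = 0" for j
      proof (rule ccontr)
        assume nz: "Q x j \<noteq> 0"
        define t where "t = - (Q j j + 1) / (2 * Q j x)"
        have nz': "Q j x \<noteq> 0" using nz Qs by simp
        have "quad_form Q (\<lambda>k. (if k = j then 1 else 0) + t * ex k) = Q j j + 2 * t * Q j x"
          unfolding qf_expand[OF sQ] ex_def qf_unit bil_unit using True by simp
        also have "\<dots> = -1" using nz' unfolding t_def by (simp add: field_simps)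
        finally have "quad_form Q (\<lambda>k. (if k = j then 1 else 0) + t * ex k) < 0" by simp
        thus False using pQ unfolding psd_def by (meson not_le)
      qed
      have "\<forall>i j. i \<notin> S \<or> j \<notin> S \<longrightarrow> Q i j = 0"
        using supp row Qs by (metis insert_iff)
      thus ?thesis using insert.IH sQ pQ by blast
    next
      case False
      hence Qxp: "Q x x > 0" using \<open>Q x x \<ge> 0\<close> by simp
      define Q' where "Q' = (\<lambda>i j. Q i j - Q x i * Q x j / Q x x)"
      have sQ': "symm Q'" unfolding symm_def Q'_def using Qs by (simp add: mult.commute)
      have suppQ': "\<forall>i j. i \<notin> S \<or> j \<notin> S \<longrightarrow> Q' i j = 0"
      proof (intro allI impI)
        fix i j assume "i \<notin> S \<or> j \<notin> S"
        thus "Q' i j = 0"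
        proof
          assume "i \<notin> S"
          show ?thesis
          proof (cases "i = x")
            case True thus ?thesis unfolding Q'_def using Qxp by simp
          next
            case False
            hence "Q i j = 0" "Q x i = 0" using supp \<open>i \<notin> S\<close> Qs by (metis insert_iff)+
            thus ?thesis unfolding Q'_def by simp
          qed
        next
          assume "j \<notin> S"
          show ?thesis
          proof (cases "j = x")
            case True thus ?thesis unfolding Q'_def using Qxp Qs by simp
          next
            case False
            hence "Q i j = 0" "Q x j = 0" using supp \<open>j \<notin> S\<close> Qs by (metis insert_iff)+
            thus ?thesis unfolding Q'_def by simp
          qed
        qed
      qed
      have pQ': "psd Q'"
        unfolding psd_def
      proof
        fix v
        define b where "b = (\<Sum>i\<in>UNIV. v i * Q x i)"
        have bb: "bil Q v ex = b" unfolding ex_def unit_bil_right b_def using Qs by simp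
        define t where "t = - b / Q x x"
        have "0 \<le> quad_form Q (\<lambda>k. v k + t * ex k)" using pQ unfolding psd_def by blast
        also have "\<dots> = quad_form Q v + 2 * t * b + t^2 * Q x x"
          unfolding qf_expand[OF sQ] bb unfolding ex_def qf_unit by simp
        also have "\<dots> = quad_form Q v - b^2 / Q x x" using Qxp unfolding t_def
          by (simp add: field_simps power2_eq_square)
        also have "\<dots> = quad_form Q' v"
        proof -
          have "quad_form Q' v = quad_form Q v - (\<Sum>i\<in>UNIV. \<Sum>j\<in>UNIV. (v i * Q x i) * (v j * Q x j)) / Q x x"
            unfolding quad_form_def Q'_def
            by (simp add: algebra_simps sum_subtractf sum_divide_distrib)
          also have "(\<Sum>i\<in>UNIV. \<Sum>j\<in>UNIV. (v i * Q x i) * (v j * Q x j)) = b^2"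
            unfolding b_def power2_eq_square sum_product ..
          finally show ?thesis by simp
        qed
        finally show "0 \<le> quad_form Q' v" .
      qed
      obtain rs where rs: "\<forall>i j. Q' i j = (\<Sum>r\<leftarrow>rs. r i * r j)"
        using insert.IH sQ' pQ' suppQ' by blast
      define r0 where "r0 = (\<lambda>i. Q x i / sqrt (Q x x))"
      have "Q i j = (\<Sum>r\<leftarrow>r0 # rs. r i * r j)" for i j
      proof -
        have "r0 i * r0 j = Q x i * Q x j / Q x x" unfolding r0_def using Qxp
          by (simp add: field_simps real_sqrt_mult[symmetric])
        thus ?thesis using rs unfolding Q'_def by (simp, metis add_diff_cancel_left' diff_add_cancel add.commute)
      qed
      thus ?thesis by blast
    qed
  qed
qed

definition kron :: "('a \<Rightarrow> 'a \<Rightarrow> real) \<Rightarrow> ('b \<Rightarrow> 'b \<Rightarrow> real) \<Rightarrow> ('a \<times> 'b) \<Rightarrow> ('a \<times> 'b) \<Rightarrow> real" where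
  "kron P Q = (\<lambda>p q. P (fst p) (fst q) * Q (snd p) (snd q))"

lemma sum_UNIV_prod:
  fixes f :: "'a::finite \<times> 'b::finite \<Rightarrow> 'c::comm_monoid_add"
  shows "(\<Sum>p\<in>(UNIV::('a::finite \<times> 'b::finite) set). f p) = (\<Sum>i\<in>UNIV. \<Sum>j\<in>UNIV. f (i,j))"
  using sum.cartesian_product[where g="\<lambda>i j. f (i,j)" and A="UNIV::'a set" and B="UNIV::'b set"]
  by (simp add: UNIV_Times_UNIV)

lemma kron_rank1:
  fixes P :: "'a::finite \<Rightarrow> 'a \<Rightarrow> real" and r :: "'b::finite \<Rightarrow> real"
  assumes "psd P"
  shows "0 \<le> quad_form (kron P (\<lambda>j j'. r j * r j')) w"
proof -
  define z where "z = (\<lambda>i. \<Sum>j\<in>UNIV. w (i,j) * r j)"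
  have "quad_form (kron P (\<lambda>j j'. r j * r j')) w =
      (\<Sum>i\<in>UNIV. \<Sum>j\<in>UNIV. \<Sum>i'\<in>UNIV. \<Sum>j'\<in>UNIV. w (i,j) * (P i i' * (r j * r j')) * w (i',j'))"
    by (simp add: quad_form_def kron_def sum_UNIV_prod)
  also have "\<dots> = (\<Sum>i\<in>UNIV. \<Sum>i'\<in>UNIV. \<Sum>j\<in>UNIV. \<Sum>j'\<in>UNIV. w (i,j) * (P i i' * (r j * r j')) * w (i',j'))"
    by (rule sum.cong[OF refl], rule sum.swap)
  also have "\<dots> = quad_form P z"
  proof -
    have "z i * P i i' * z i' = (\<Sum>j\<in>UNIV. \<Sum>j'\<in>UNIV. w (i,j) * (P i i' * (r j * r j')) * w (i',j'))" for i i'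
    proof -
      have "z i * P i i' * z i' = (\<Sum>j'\<in>UNIV. \<Sum>j\<in>UNIV. w (i,j) * (P i i' * (r j * r j')) * w (i',j'))"
        unfolding z_def sum_distrib_right sum_distrib_left by (intro sum.cong refl) (simp add: mult_ac)
      also have "\<dots> = (\<Sum>j\<in>UNIV. \<Sum>j'\<in>UNIV. w (i,j) * (P i i' * (r j * r j')) * w (i',j'))"
        by (rule sum.swap)
      finally show ?thesis .
    qed
    thus ?thesis unfolding quad_form_def by simp
  qed
  finally show ?thesis using assms unfolding psd_def by simp
qed

lemma kron_list:
  fixes P :: "'a::finite \<Rightarrow> 'a \<Rightarrow> real" and rs :: "('b::finite \<Rightarrow> real) list"
  assumes "psd P"
  shows "0 \<le> quad_form (kron P (\<lambda>j j'. \<Sum>r\<leftarrow>rs. r j * r j')) w"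
proof (induction rs)
  case Nil
  then show ?case by (simp add: quad_form_def kron_def)
next
  case (Cons r rs)
  have eq: "kron P (\<lambda>j j'. \<Sum>r\<leftarrow>r # rs. r j * r j') =
        (\<lambda>p q. kron P (\<lambda>j j'. r j * r j') p q + kron P (\<lambda>j j'. \<Sum>r\<leftarrow>rs. r j * r j') p q)"
    by (simp add: kron_def algebra_simps)
  show ?case unfolding eq qf_add by (rule add_nonneg_nonneg[OF kron_rank1[OF assms] Cons])
qed

lemma kron_psd:
  fixes P :: "'a::finite \<Rightarrow> 'a \<Rightarrow> real" and Q :: "'b::finite \<Rightarrow> 'b \<Rightarrow> real"
  assumes "psd P" "psd Q" "symm Q"
  shows "psd (kron P Q)"
proof -
  have "\<exists>rs. \<forall>i j. Q i j = (\<Sum>r\<leftarrow>rs. r i * r j)"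
    using decomp[of "UNIV::'b set"] assms by simp
  then obtain rs where rs: "\<forall>i j. Q i j = (\<Sum>r\<leftarrow>rs. r i * r j)" by blast
  have "Q = (\<lambda>j j'. \<Sum>r\<leftarrow>rs. r j * r j')" using rs by auto
  thus ?thesis using kron_list[OF assms(1)] unfolding psd_def by blast
qed

lemma qf_diag: "quad_form (\<lambda>p q. if p = q then c else 0) v = c * sqnorm v"
  unfolding quad_form_def sqnorm_def
  by (simp add: if_distrib[of "\<lambda>x. _ * x"] if_distrib[of "\<lambda>x. x * _"] sum_distrib_left power2_eq_square mult_ac cong: if_cong)

lemma qf_ones: "quad_form (\<lambda>p q. 1) v = (\<Sum>i\<in>UNIV. v i)^2"
  unfolding quad_form_def power2_eq_square sum_product by simp

lemma psd_ones: "psd (\<lambda>p q. 1)"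
  unfolding psd_def qf_ones by simp

lemma alpha_lower:
  assumes "weighted_adj E C"
  shows "alpha_S E \<le> sA C"
  unfolding alpha_S_def sA_def[symmetric]
  by (rule cINF_lower) (use assms sA_nonneg in \<open>auto simp: bdd_below_def\<close>)

lemma prod_bound:
  fixes G :: "'a::finite \<Rightarrow> 'a \<Rightarrow> bool" and H :: "'b::finite \<Rightarrow> 'b \<Rightarrow> bool"
  assumes wA: "weighted_adj G A" and wB: "weighted_adj H B"
  shows "alpha_S (strong_product G H) \<le> sA A * sA B"
proof -
  define a where "a = sA A"
  define b where "b = sA B"
  obtain l where pA: "psd (\<lambda>i j. ((if i = j then a else 0) - 1) + l * A i j)"
    using cert[OF wA] a_def by blast
  obtain m where pB: "psd (\<lambda>i j. ((if i = j then b else 0) - 1) + m * B i j)"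
    using cert[OF wB] b_def by blast
  have a0: "a \<ge> 0" "b \<ge> 0" using sA_nonneg a_def b_def by auto
  have As: "A i j = A j i" "A i i = 0" "i \<noteq> j \<Longrightarrow> \<not> G i j \<Longrightarrow> A i j = 0" for i j
    using wA unfolding weighted_adj_def by auto
  have Bs: "B i j = B j i" "B i i = 0" "i \<noteq> j \<Longrightarrow> \<not> H i j \<Longrightarrow> B i j = 0" for i j
    using wB unfolding weighted_adj_def by auto
  define Xp where "Xp = (\<lambda>i j. (if i = j then a else 0) + l * A i j)"
  define Yp where "Yp = (\<lambda>i j. (if i = j then b else 0) + m * B i j)"
  define PA where "PA = (\<lambda>i j. ((if i = j then a else 0) - 1) + l * A i j)"
  define PB where "PB = (\<lambda>i j. ((if i = j then b else 0) - 1) + m * B i j)"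
  define C where "C = (\<lambda>p q. kron Xp Yp p q - (if p = q then a * b else 0))"
  have wC: "weighted_adj (strong_product G H) C"
    unfolding weighted_adj_def
  proof (intro conjI allI impI)
    fix p q :: "'a \<times> 'b"
    show "C p q = C q p" unfolding C_def kron_def Xp_def Yp_def using As(1) Bs(1) by (auto simp: eq_commute)
  next
    fix p :: "'a \<times> 'b"
    show "C p p = 0" unfolding C_def kron_def Xp_def Yp_def using As(2) Bs(2) by simp
  next
    fix p q :: "'a \<times> 'b"
    assume h: "p \<noteq> q \<and> \<not> strong_product G H p q"
    obtain i j where p: "p = (i,j)" by fastforce
    obtain i' j' where q: "q = (i',j')" by fastforce
    have ne: "(i,j) \<noteq> (i',j')" and ns: "\<not> ((G i i' \<and> H j j') \<or> (G i i' \<and> j = j') \<or> (i = i' \<and> H j j'))"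
      using h unfolding p q strong_product_def by auto
    have "Xp i i' * Yp j j' = 0"
    proof (cases "i = i'")
      case True
      hence "j \<noteq> j'" "\<not> H j j'" using ne ns by auto
      thus ?thesis unfolding Xp_def Yp_def using True As(2) Bs(3) by simp
    next
      case False
      show ?thesis
      proof (cases "G i i'")
        case True
        hence "j \<noteq> j'" "\<not> H j j'" using ns by auto
        thus ?thesis unfolding Xp_def Yp_def using Bs(3) by simp
      next
        case False
        thus ?thesis unfolding Xp_def using \<open>i \<noteq> i'\<close> As(3) by simp
      qed
    qed
    thus "C p q = 0" unfolding C_def kron_def p q using ne by auto
  qed
  have "sA C \<le> a * b"
    unfolding sA_def
  proof (rule cSUP_least)
    show "{v \<in> sphS. quad_form C v = 0} \<noteq> {}" using sA_set_ne by blast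
  next
    fix v assume "v \<in> {v \<in> sphS. quad_form C v = 0}"
    hence vS: "v \<in> sphS" and vC: "quad_form C v = 0" by auto
    have eqK: "kron Xp Yp = (\<lambda>p q. kron PA Yp p q + kron (\<lambda>_ _. 1) PB p q + kron (\<lambda>_ _. 1) (\<lambda>_ _. 1) p q)"
      unfolding kron_def Xp_def Yp_def PA_def PB_def by (intro ext) (simp add: algebra_simps)
    have sYp: "symm Yp" and sPB: "symm PB" unfolding symm_def Yp_def PB_def using Bs(1) by auto
    have pYp: "psd Yp"
    proof -
      have e: "Yp = (\<lambda>i j. PB i j + 1)" unfolding Yp_def PB_def by (intro ext) simp
      have "quad_form Yp v = quad_form PB v + quad_form (\<lambda>_ _. 1) v" for v
        unfolding e by (rule qf_add)
      thus ?thesis using pB[folded PB_def] psd_ones unfolding psd_def by (metis add_nonneg_nonneg)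
    qed
    have k1: "quad_form (kron PA Yp) v \<ge> 0" using kron_psd[OF pA[folded PA_def] pYp sYp] psd_def by blast
    have k2: "quad_form (kron (\<lambda>_ _. 1) PB) v \<ge> 0" using kron_psd[OF psd_ones pB[folded PB_def] sPB] psd_def by blast
    have k3: "quad_form (kron (\<lambda>_ _. 1) (\<lambda>_ _. 1)) v = (\<Sum>p\<in>UNIV. v p)^2"
      using qf_ones[of v] unfolding kron_def by simp
    have "quad_form C v = quad_form (kron Xp Yp) v - a * b * sqnorm v"
      unfolding C_def using qf_add[of "kron Xp Yp" "\<lambda>p q. - (if p = q then a * b else 0)" v]
        qf_scale[of "-1" "\<lambda>p q. if p = q then a * b else 0" v] qf_diag[of "a*b" v] by simp
    hence "quad_form (kron Xp Yp) v = a * b * sqnorm v" using vC by simp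
    moreover have "quad_form (kron Xp Yp) v = quad_form (kron PA Yp) v + quad_form (kron (\<lambda>_ _. 1) PB) v + (\<Sum>p\<in>UNIV. v p)^2"
      unfolding eqK qf_add k3 ..
    ultimately have ineq: "(\<Sum>p\<in>UNIV. v p)^2 \<le> a * b * sqnorm v" using k1 k2 by linarith
    have ss: "(\<Sum>p\<in>UNIV. v p) = sqnorm v" using vS unfolding sphS_def sqnorm_def by simp
    have sn: "sqnorm v \<ge> 0" unfolding sqnorm_def by (simp add: sum_nonneg)
    show "sqnorm v \<le> a * b"
    proof (cases "sqnorm v = 0")
      case True thus ?thesis using a0 by simp
    next
      case False
      hence "sqnorm v > 0" using sn by simp
      moreover have "sqnorm v * sqnorm v \<le> (a * b) * sqnorm v" using ineq ss by (simp add: power2_eq_square)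
      ultimately show ?thesis by simp
    qed
  qed
  thus ?thesis using alpha_lower[OF wC] a_def b_def by simp
qed

lemma wa_ne: "{A. weighted_adj E A} \<noteq> {}"
proof -
  have "(\<lambda>_ _. 0) \<in> {A. weighted_adj E A}" unfolding weighted_adj_def by simp
  thus ?thesis by blast
qed

lemma alpha_ge1: "alpha_S (E::'a::finite \<Rightarrow> 'a \<Rightarrow> bool) \<ge> 1"
  unfolding alpha_S_def sA_def[symmetric]
  by (rule cINF_greatest[OF wa_ne]) (intro sA_ge1, simp add: weighted_adj_def)

theorem lemma3:
  fixes G :: "'a::finite \<Rightarrow> 'a \<Rightarrow> bool" and H :: "'b::finite \<Rightarrow> 'b \<Rightarrow> bool"
  assumes "simple_graph G" and "simple_graph H"
  shows "alpha_S (strong_product G H) \<le> alpha_S G * alpha_S H"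
proof -
  define al where "al = alpha_S (strong_product G H)"
  have gG: "alpha_S G \<ge> 1" by (rule alpha_ge1)
  have step: "al \<le> alpha_S G * sA B" if wB: "weighted_adj H B" for B
  proof -
    have sB: "sA B \<ge> 1" by (rule sA_ge1) (use wB in \<open>simp add: weighted_adj_def\<close>)
    have "al / sA B \<le> alpha_S G"
      unfolding alpha_S_def sA_def[symmetric]
    proof (rule cINF_greatest[OF wa_ne])
      fix A assume "A \<in> {A. weighted_adj G A}"
      hence "al \<le> sA A * sA B" using prod_bound[OF _ wB] al_def by auto
      thus "al / sA B \<le> sA A" using sB by (simp add: divide_le_eq)
    qed
    thus ?thesis using sB by (simp add: divide_le_eq mult.commute)
  qed
  have "al / alpha_S G \<le> alpha_S H"
    unfolding alpha_S_def[of H] sA_def[symmetric]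
  proof (rule cINF_greatest[OF wa_ne])
    fix B assume "B \<in> {B. weighted_adj H B}"
    hence "al \<le> alpha_S G * sA B" using step by auto
    thus "al / alpha_S G \<le> sA B" using gG by (simp add: divide_le_eq mult.commute)
  qed
  thus ?thesis using gG by (simp add: divide_le_eq mult.commute al_def)
qed

end
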